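(* Let $\tau\in(0,\infty]$ and let $\{(\mathbf{x}_i,\mathbf{v}_i)\}_{i=1}^N$ be a solution on $[0,\tau)$ of the Cucker–Smale model with bonding force $$\dot{\mathbf{x}}_i=\mathbf{v}_i,\qquad \dot{\mathbf{v}}_i=\frac{\kappa_0}{N}\sum_{j=1}^N\psi(\|\mathbf{x}_j-\mathbf{x}_i\|)(\mathbf{v}_j-\mathbf{v}_i)+\frac{\kappa_1}{N}\sum_{j\ne i}\Big\langle\mathbf{v}_j-\mathbf{v}_i,\frac{\mathbf{x}_j-\mathbf{x}_i}{\|\mathbf{x}_j-\mathbf{x}_i\|}\Big\rangle\frac{\mathbf{x}_j-\mathbf{x}_i}{\|\mathbf{x}_j-\mathbf{x}_i\|}+\frac{\kappa_2}{N}\sum_{j\ne i}\big(\|\mathbf{x}_j-\mathbf{x}_i\|-d^\infty_{ij}\big)\frac{\mathbf{x}_j-\mathbf{x}_i}{\|\mathbf{x}_j-\mathbf{x}_i\|}.$$ Then for all $t\in[0,\tau)$, $E(t)+\int_0^tP(s)\,ds=E(0)$, where $$P:=\frac{\kappa_0}{2N}\sum_{i,j=1}^N\psi(\|\mathbf{x}_j-\mathbf{x}_i\|)\|\mathbf{v}_j-\mathbf{v}_i\|^2+\frac{\kappa_1}{2N}\sum_{i\ne j}\Big\langle\mathbf{v}_j-\mathbf{v}_i,\frac{\mathbf{x}_j-\mathbf{x}_i}{\|\mathbf{x}_j-\mathbf{x}_i\|}\Big\rangle^2.$$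
   Context: $N\ge 2$, $d\ge1$, $[N]=\{1,\dots,N\}$; Euclidean norm and inner product on $\mathbb{R}^d$; $\kappa_0,\kappa_1,\kappa_2\ge 0$; $[d^\infty_{ij}]$ real symmetric with zero diagonal; $\psi:[0,\infty)\to[0,\infty)$ bounded and locally Lipschitz. A solution is a $C^1$ family with $\mathbf{x}_i(t)\ne\mathbf{x}_j(t)$ for $i\ne j$ satisfying the system. The total energy is $E:=\frac12\sum_{i=1}^N\|\mathbf{v}_i\|^2+\frac{\kappa_2}{4N}\sum_{i,j=1}^N\big(\|\mathbf{x}_j-\mathbf{x}_i\|-d^\infty_{ij}\big)^2$. *)

theory Defs
  imports "HOL-Analysis.Analysis" "HOL-Library.Extended_Real"
begin

definition unitdir :: "'a::euclidean_space \<Rightarrow> 'a \<Rightarrow> 'a" where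
  "unitdir xi xj = (1 / norm (xj - xi)) *\<^sub>R (xj - xi)"

definition cs_rhs ::
  "nat \<Rightarrow> real \<Rightarrow> real \<Rightarrow> real \<Rightarrow> (real \<Rightarrow> real) \<Rightarrow> (nat \<Rightarrow> nat \<Rightarrow> real)
   \<Rightarrow> (nat \<Rightarrow> 'a::euclidean_space) \<Rightarrow> (nat \<Rightarrow> 'a) \<Rightarrow> nat \<Rightarrow> 'a" where
  "cs_rhs N k0 k1 k2 \<psi> dinf x v i =
     (k0 / real N) *\<^sub>R (\<Sum>j\<in>{1..N}. \<psi> (norm (x j - x i)) *\<^sub>R (v j - v i))
   + (k1 / real N) *\<^sub>R (\<Sum>j\<in>{1..N} - {i}.
        inner (v j - v i) (unitdir (x i) (x j)) *\<^sub>R unitdir (x i) (x j))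
   + (k2 / real N) *\<^sub>R (\<Sum>j\<in>{1..N} - {i}.
        (norm (x j - x i) - dinf i j) *\<^sub>R unitdir (x i) (x j))"

definition total_energy ::
  "nat \<Rightarrow> real \<Rightarrow> (nat \<Rightarrow> nat \<Rightarrow> real) \<Rightarrow> (nat \<Rightarrow> 'a::euclidean_space) \<Rightarrow> (nat \<Rightarrow> 'a) \<Rightarrow> real" where
  "total_energy N k2 dinf x v =
     (1/2) * (\<Sum>i\<in>{1..N}. (norm (v i))\<^sup>2)
   + (k2 / (4 * real N)) * (\<Sum>i\<in>{1..N}. \<Sum>j\<in>{1..N}. (norm (x j - x i) - dinf i j)\<^sup>2)"

definition dissipation ::
  "nat \<Rightarrow> real \<Rightarrow> real \<Rightarrow> (real \<Rightarrow> real) \<Rightarrow> (nat \<Rightarrow> 'a::euclidean_space) \<Rightarrow> (nat \<Rightarrow> 'a) \<Rightarrow> real" where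
  "dissipation N k0 k1 \<psi> x v =
     (k0 / (2 * real N)) * (\<Sum>i\<in>{1..N}. \<Sum>j\<in>{1..N}. \<psi> (norm (x j - x i)) * (norm (v j - v i))\<^sup>2)
   + (k1 / (2 * real N)) * (\<Sum>i\<in>{1..N}. \<Sum>j\<in>{1..N} - {i}. (inner (v j - v i) (unitdir (x i) (x j)))\<^sup>2)"

definition locally_lipschitz_nonneg :: "(real \<Rightarrow> real) \<Rightarrow> bool" where
  "locally_lipschitz_nonneg \<psi> \<longleftrightarrow>
     (\<forall>r\<ge>0. \<exists>e>0. \<exists>L. L-lipschitz_on (cball r e \<inter> {0..}) \<psi>)"

end

theory Submission
  imports Defs
begin


lemma unitdir_swap: "unitdir b a = - unitdir a (b::'a::euclidean_space)"
  unfolding unitdir_def by (simp add: norm_minus_commute scaleR_right_diff_distrib)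

lemma unitdir_same[simp]: "unitdir a a = 0"
  unfolding unitdir_def by simp

lemma sym_half:
  fixes f g :: "nat \<Rightarrow> nat \<Rightarrow> real"
  assumes "finite A" "\<And>i j. i \<in> A \<Longrightarrow> j \<in> A \<Longrightarrow> f i j + f j i = g i j"
  shows "(\<Sum>i\<in>A. \<Sum>j\<in>A. f i j) = (1/2) * (\<Sum>i\<in>A. \<Sum>j\<in>A. g i j)"
proof -
  have "(\<Sum>i\<in>A. \<Sum>j\<in>A. g i j) = (\<Sum>i\<in>A. \<Sum>j\<in>A. f i j + f j i)"
    using assms(2) by (intro sum.cong) auto
  also have "\<dots> = (\<Sum>i\<in>A. \<Sum>j\<in>A. f i j) + (\<Sum>i\<in>A. \<Sum>j\<in>A. f j i)"
    by (simp add: sum.distrib)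
  also have "(\<Sum>i\<in>A. \<Sum>j\<in>A. f j i) = (\<Sum>i\<in>A. \<Sum>j\<in>A. f i j)"
    by (rule sum.swap)
  finally show ?thesis by simp
qed

lemma sum_minus_self:
  fixes f :: "nat \<Rightarrow> 'b::comm_monoid_add"
  assumes "finite A" "f i = 0"
  shows "(\<Sum>j\<in>A - {i}. f j) = (\<Sum>j\<in>A. f j)"
  using assms by (metis (no_types) add.left_neutral insert_Diff_single sum.insert_remove sum.insert_if) 

lemma algebra_key:
  fixes X V :: "nat \<Rightarrow> 'a::euclidean_space"
  assumes dsym: "\<forall>i\<in>{1..N}. \<forall>j\<in>{1..N}. dinf i j = dinf j i"
  shows "(\<Sum>i\<in>{1..N}. inner (V i) (cs_rhs N k0 k1 k2 \<psi> dinf X V i))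
     + (k2 / (4 * real N)) * (\<Sum>i\<in>{1..N}. \<Sum>j\<in>{1..N}. 2 * (norm (X j - X i) - dinf i j) * inner (V j - V i) (unitdir (X i) (X j)))
     = - dissipation N k0 k1 \<psi> X V"
proof -
  let ?A = "{1..N}"
  let ?u = "\<lambda>i j. unitdir (X i) (X j)"
  let ?D = "\<lambda>i j. inner (V j - V i) (?u i j)"
  let ?r = "\<lambda>i j. norm (X j - X i) - dinf i j"
  have fin: "finite ?A" by simp
  have e1: "(\<Sum>i\<in>?A. \<Sum>j\<in>?A. \<psi> (norm (X j - X i)) * inner (V i) (V j - V i))
      = (1/2) * (\<Sum>i\<in>?A. \<Sum>j\<in>?A. - (\<psi> (norm (X j - X i)) * (norm (V j - V i))\<^sup>2))"
    apply (rule sym_half[OF fin])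
    apply (simp add: norm_minus_commute power2_norm_eq_inner inner_diff_left inner_diff_right inner_commute)
    by (simp add: algebra_simps)
  have e2: "(\<Sum>i\<in>?A. \<Sum>j\<in>?A. ?D i j * inner (V i) (?u i j))
      = (1/2) * (\<Sum>i\<in>?A. \<Sum>j\<in>?A. - (?D i j)\<^sup>2)"
  proof (rule sym_half[OF fin])
    fix i j
    have s: "unitdir (X j) (X i) = - unitdir (X i) (X j)" by (rule unitdir_swap)
    show "?D i j * inner (V i) (?u i j) + ?D j i * inner (V j) (?u j i) = - (?D i j)\<^sup>2"
      unfolding s by (simp add: power2_eq_square inner_diff_left inner_diff_right algebra_simps)
  qed
  have e3: "(\<Sum>i\<in>?A. \<Sum>j\<in>?A. ?r i j * inner (V i) (?u i j))
      = (1/2) * (\<Sum>i\<in>?A. \<Sum>j\<in>?A. - (?r i j * ?D i j))"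
  proof (rule sym_half[OF fin])
    fix i j assume ij: "i \<in> ?A" "j \<in> ?A"
    have s: "unitdir (X j) (X i) = - unitdir (X i) (X j)" by (rule unitdir_swap)
    have d: "dinf j i = dinf i j" using dsym ij by auto
    show "?r i j * inner (V i) (?u i j) + ?r j i * inner (V j) (?u j i) = - (?r i j * ?D i j)"
      unfolding s d by (simp add: norm_minus_commute inner_diff_left inner_diff_right algebra_simps)
  qed
  have lhs1: "(\<Sum>i\<in>?A. inner (V i) (cs_rhs N k0 k1 k2 \<psi> dinf X V i)) =
     (k0 / real N) * (\<Sum>i\<in>?A. \<Sum>j\<in>?A. \<psi> (norm (X j - X i)) * inner (V i) (V j - V i))
   + (k1 / real N) * (\<Sum>i\<in>?A. \<Sum>j\<in>?A. ?D i j * inner (V i) (?u i j))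
   + (k2 / real N) * (\<Sum>i\<in>?A. \<Sum>j\<in>?A. ?r i j * inner (V i) (?u i j))"
    unfolding cs_rhs_def
    by (simp add: inner_add_right inner_sum_right sum.distrib sum_distrib_left sum_minus_self)
  have diss: "dissipation N k0 k1 \<psi> X V =
     (k0 / (2 * real N)) * (\<Sum>i\<in>?A. \<Sum>j\<in>?A. \<psi> (norm (X j - X i)) * (norm (V j - V i))\<^sup>2)
   + (k1 / (2 * real N)) * (\<Sum>i\<in>?A. \<Sum>j\<in>?A. (?D i j)\<^sup>2)"
    unfolding dissipation_def by (simp add: sum_minus_self)
  have m: "(\<Sum>i\<in>?A. \<Sum>j\<in>?A. 2 * ?r i j * ?D i j) = 2 * (\<Sum>i\<in>?A. \<Sum>j\<in>?A. ?r i j * ?D i j)"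
    by (simp only: sum_distrib_left mult.assoc)
  have sn: "\<And>f::nat\<Rightarrow>nat\<Rightarrow>real. (\<Sum>i\<in>?A. \<Sum>j\<in>?A. - f i j) = - (\<Sum>i\<in>?A. \<Sum>j\<in>?A. f i j)"
    by (simp add: sum_negf)
  define S1 where "S1 = (\<Sum>i\<in>?A. \<Sum>j\<in>?A. \<psi> (norm (X j - X i)) * (norm (V j - V i))\<^sup>2)"
  define S2 where "S2 = (\<Sum>i\<in>?A. \<Sum>j\<in>?A. (?D i j)\<^sup>2)"
  define S3 where "S3 = (\<Sum>i\<in>?A. \<Sum>j\<in>?A. ?r i j * ?D i j)"
  show ?thesis
    unfolding lhs1 diss e1 e2 e3 m sn S1_def[symmetric] S2_def[symmetric] S3_def[symmetric]
    by (simp add: field_simps)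
qed




lemma norm_real_deriv:
  fixes f :: "real \<Rightarrow> 'a::euclidean_space"
  assumes "(f has_vector_derivative f') (at t within S)" "f t \<noteq> 0"
  shows "((\<lambda>s. norm (f s)) has_real_derivative inner f' (unitdir 0 (f t))) (at t within S)"
proof -
  have "((\<lambda>s. norm (f s)) has_derivative (\<lambda>h. (h *\<^sub>R f') \<bullet> sgn (f t))) (at t within S)"
    using has_derivative_compose[OF assms(1)[unfolded has_vector_derivative_def] has_derivative_norm[OF assms(2)]] .
  then show ?thesis
    unfolding has_field_derivative_def
    by (rule has_derivative_eq_rhs) (auto simp: unitdir_def sgn_div_norm divide_inverse_commute[symmetric] fun_eq_iff)
qed

lemma sqnorm_real_deriv:
  fixes f :: "real \<Rightarrow> 'a::euclidean_space"
  assumes "(f has_vector_derivative f') (at t within S)"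
  shows "((\<lambda>s. (norm (f s))\<^sup>2) has_real_derivative 2 * inner (f t) f') (at t within S)"
proof -
  have "((\<lambda>s. inner (f s) (f s)) has_derivative (\<lambda>h. inner (f t) (h *\<^sub>R f') + inner (h *\<^sub>R f') (f t))) (at t within S)"
    using has_derivative_inner[OF assms(1)[unfolded has_vector_derivative_def] assms(1)[unfolded has_vector_derivative_def]] .
  then show ?thesis
    unfolding has_field_derivative_def power2_norm_eq_inner
    by (rule has_derivative_eq_rhs) (auto simp: fun_eq_iff inner_commute)
qed

lemma pair_deriv:
  fixes xi xj vi vj :: "real \<Rightarrow> 'a::euclidean_space"
  assumes "(xi has_vector_derivative vi t) (at t within S)" "(xj has_vector_derivative vj t) (at t within S)"
    and "xi = xj \<or> xi t \<noteq> xj t" "xi = xj \<Longrightarrow> vi = vj"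
  shows "((\<lambda>s. (norm (xj s - xi s) - d)\<^sup>2) has_real_derivative
           2 * (norm (xj t - xi t) - d) * inner (vj t - vi t) (unitdir (xi t) (xj t))) (at t within S)"
proof (cases "xi = xj")
  case True
  then show ?thesis using assms(4) by simp
next
  case False
  then have ne: "xj t - xi t \<noteq> 0" using assms(3) by auto
  have "((\<lambda>s. xj s - xi s) has_vector_derivative vj t - vi t) (at t within S)"
    by (intro has_vector_derivative_diff assms(1,2))
  from norm_real_deriv[OF this ne]
  have n: "((\<lambda>s. norm (xj s - xi s) - d) has_real_derivative inner (vj t - vi t) (unitdir 0 (xj t - xi t))) (at t within S)"
    by (auto intro!: derivative_eq_intros)
  have u: "unitdir 0 (xj t - xi t) = unitdir (xi t) (xj t)" by (simp add: unitdir_def)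
  show ?thesis using DERIV_power[OF n, of 2] unfolding u by (simp add: algebra_simps)
qed
theorem proposition2p3:
  fixes N :: nat and k0 k1 k2 :: real and \<psi> :: "real \<Rightarrow> real"
    and dinf :: "nat \<Rightarrow> nat \<Rightarrow> real" and \<tau> :: ereal
    and x v :: "nat \<Rightarrow> real \<Rightarrow> 'a::euclidean_space"
  assumes N: "N \<ge> 2"
    and k: "k0 \<ge> 0" "k1 \<ge> 0" "k2 \<ge> 0"
    and dsym: "\<forall>i\<in>{1..N}. \<forall>j\<in>{1..N}. dinf i j = dinf j i"
    and ddiag: "\<forall>i\<in>{1..N}. dinf i i = 0"
    and psi_nonneg: "\<forall>s\<ge>0. \<psi> s \<ge> 0"
    and psi_bdd: "bounded (\<psi> ` {0..})"
    and psi_lip: "locally_lipschitz_nonneg \<psi>"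
    and tau: "\<tau> > 0"
    and xcont: "\<forall>i\<in>{1..N}. continuous_on {t. 0 \<le> t \<and> ereal t < \<tau>} (v i)"
    and vcont: "\<forall>i\<in>{1..N}. continuous_on {t. 0 \<le> t \<and> ereal t < \<tau>}
                  (\<lambda>t. cs_rhs N k0 k1 k2 \<psi> dinf (\<lambda>j. x j t) (\<lambda>j. v j t) i)"
    and xder: "\<forall>i\<in>{1..N}. \<forall>t. 0 \<le> t \<and> ereal t < \<tau> \<longrightarrow>
                 (x i has_vector_derivative v i t) (at t within {t. 0 \<le> t \<and> ereal t < \<tau>})"
    and vder: "\<forall>i\<in>{1..N}. \<forall>t. 0 \<le> t \<and> ereal t < \<tau> \<longrightarrow>
                 (v i has_vector_derivative cs_rhs N k0 k1 k2 \<psi> dinf (\<lambda>j. x j t) (\<lambda>j. v j t) i)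
                   (at t within {t. 0 \<le> t \<and> ereal t < \<tau>})"
    and noncoll: "\<forall>t. 0 \<le> t \<and> ereal t < \<tau> \<longrightarrow>
                 (\<forall>i\<in>{1..N}. \<forall>j\<in>{1..N}. i \<noteq> j \<longrightarrow> x i t \<noteq> x j t)"
  shows "\<forall>t. 0 \<le> t \<and> ereal t < \<tau> \<longrightarrow>
           total_energy N k2 dinf (\<lambda>i. x i t) (\<lambda>i. v i t)
           + integral {0..t} (\<lambda>s. dissipation N k0 k1 \<psi> (\<lambda>i. x i s) (\<lambda>i. v i s))
           = total_energy N k2 dinf (\<lambda>i. x i 0) (\<lambda>i. v i 0)"
proof (intro allI impI)
  let ?S = "{t. 0 \<le> t \<and> ereal t < \<tau>}"
  let ?A = "{1..N}"
  define E where "E s = total_energy N k2 dinf (\<lambda>i. x i s) (\<lambda>i. v i s)" for s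
  define P where "P s = dissipation N k0 k1 \<psi> (\<lambda>i. x i s) (\<lambda>i. v i s)" for s
  have Ed: "(E has_real_derivative - P s) (at s within ?S)" if sS: "s \<in> ?S" for s
  proof -
    let ?W = "\<lambda>i. cs_rhs N k0 k1 k2 \<psi> dinf (\<lambda>j. x j s) (\<lambda>j. v j s) i"
    have d1: "((\<lambda>r. (norm (v i r))\<^sup>2) has_real_derivative 2 * inner (v i s) (?W i)) (at s within ?S)"
      if "i \<in> ?A" for i
      using sqnorm_real_deriv vder that sS by blast
    have d2: "((\<lambda>r. (norm (x j r - x i r) - dinf i j)\<^sup>2) has_real_derivative
           2 * (norm (x j s - x i s) - dinf i j) * inner (v j s - v i s) (unitdir (x i s) (x j s))) (at s within ?S)"
      if "i \<in> ?A" "j \<in> ?A" for i j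
    proof (rule pair_deriv)
      show "(x i has_vector_derivative v i s) (at s within ?S)" using xder that sS by blast
      show "(x j has_vector_derivative v j s) (at s within ?S)" using xder that sS by blast
      show "x i = x j \<or> x i s \<noteq> x j s" proof (cases "i = j")
        case False then show ?thesis using noncoll that sS by blast
      qed simp
      show "v i = v j" if "x i = x j"
      proof (cases "i = j")
        case False
        then have "x i s \<noteq> x j s" using noncoll \<open>i \<in> ?A\<close> \<open>j \<in> ?A\<close> sS by blast
        then show ?thesis using \<open>x i = x j\<close> by simp
      qed simp
    qed
    have D1: "((\<lambda>r. \<Sum>i\<in>?A. (norm (v i r))\<^sup>2) has_real_derivative (\<Sum>i\<in>?A. 2 * inner (v i s) (?W i))) (at s within ?S)"
      by (rule DERIV_sum) (rule d1)
    have D2: "((\<lambda>r. \<Sum>i\<in>?A. \<Sum>j\<in>?A. (norm (x j r - x i r) - dinf i j)\<^sup>2) has_real_derivative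
       (\<Sum>i\<in>?A. \<Sum>j\<in>?A. 2 * (norm (x j s - x i s) - dinf i j) * inner (v j s - v i s) (unitdir (x i s) (x j s)))) (at s within ?S)"
      by (rule DERIV_sum, rule DERIV_sum) (rule d2)
    have D3: "(E has_real_derivative
        (1/2) * (\<Sum>i\<in>?A. 2 * inner (v i s) (?W i))
      + (k2 / (4 * real N)) * (\<Sum>i\<in>?A. \<Sum>j\<in>?A. 2 * (norm (x j s - x i s) - dinf i j) * inner (v j s - v i s) (unitdir (x i s) (x j s))))
      (at s within ?S)"
      unfolding E_def[abs_def] total_energy_def
      by (rule DERIV_add[OF DERIV_cmult[OF D1] DERIV_cmult[OF D2]])
    have half: "(1/2) * (\<Sum>i\<in>?A. 2 * inner (v i s) (?W i)) = (\<Sum>i\<in>?A. inner (v i s) (?W i))"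
      by (simp add: sum_distrib_left)
    have key: "(\<Sum>i\<in>?A. inner (v i s) (?W i))
      + (k2 / (4 * real N)) * (\<Sum>i\<in>?A. \<Sum>j\<in>?A. 2 * (norm (x j s - x i s) - dinf i j) * inner (v j s - v i s) (unitdir (x i s) (x j s)))
      = - P s"
      unfolding P_def by (rule algebra_key[OF dsym])
    show ?thesis
      by (rule DERIV_cong[OF D3]) (simp only: half key)
  qed
  fix t assume t: "0 \<le> t \<and> ereal t < \<tau>"
  have sub: "{0..t} \<subseteq> ?S" proof
    fix s assume "s \<in> {0..t}"
    then have "0 \<le> s" "ereal s \<le> ereal t" by auto
    moreover have "ereal s < \<tau>" using le_less_trans[OF \<open>ereal s \<le> ereal t\<close>] t by blast
    ultimately show "s \<in> ?S" by simp
  qed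
  have "((\<lambda>s. - P s) has_integral (E t - E 0)) {0..t}"
  proof (rule fundamental_theorem_of_calculus)
    show "0 \<le> t" using t by simp
    fix s assume "s \<in> {0..t}"
    then have "s \<in> ?S" using sub by auto
    from DERIV_subset[OF Ed[OF this] sub]
    show "(E has_vector_derivative - P s) (at s within {0..t})"
      by (simp add: has_real_derivative_iff_has_vector_derivative)
  qed
  from has_integral_neg[OF this] have "(P has_integral (E 0 - E t)) {0..t}"
    by simp
  then have "integral {0..t} P = E 0 - E t" by (rule integral_unique)
  then show "total_energy N k2 dinf (\<lambda>i. x i t) (\<lambda>i. v i t)
           + integral {0..t} (\<lambda>s. dissipation N k0 k1 \<psi> (\<lambda>i. x i s) (\<lambda>i. v i s))
           = total_energy N k2 dinf (\<lambda>i. x i 0) (\<lambda>i. v i 0)"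
    unfolding E_def P_def[abs_def] by simp
qed

end
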